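(* Let $X$ be a real Hilbert space, $\mathsf{A}:X\to 2^X$ a maximal monotone operator whose zero set $S$ is nonempty, and $J:=(Id+\mathsf{A})^{-1}$. Let $x_0\in X$, $p\in S$ and $N\in\mathbb{N}\setminus\{0\}$ with $N\geq 2\|x_0-p\|$. For every $k\in\mathbb{N}$ and every monotone function $f:\mathbb{N}\to\mathbb{N}$ there exist $n\leq 24N\big(w_{f,N}^{(R)}(0)+1\big)^2$ and $x\in B_N$ such that $$\|J(x)-x\|\leq\frac{1}{f(n)+1}\quad\text{and}\quad\forall y\in B_N\ \left(\|J(y)-y\|\leq\frac{1}{n+1}\ \to\ \langle x_0-x,\,y-x\rangle\leq\frac{1}{k+1}\right),$$ where $R:=4N^4(k+1)^2$ and $w_{f,N}(m):=\max\{f(24N(m+1)^2),\,24N(m+1)^2\}$.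
   Context: $S:=\{x\in X: 0\in\mathsf{A}(x)\}$. The resolvent $J=(Id+\mathsf A)^{-1}$ is a single-valued nonexpansive map on $X$ whose fixed point set is $S$. $B_N:=\{x\in X:\ \|x-p\|\leq N\}$. A function $f:\mathbb{N}\to\mathbb{N}$ is monotone if $f(n)\leq f(n+1)$ for all $n$. $g^{(R)}$ is the $R$-fold composition of $g$ with itself ($g^{(0)}$ the identity). *)

theory Defs
  imports "HOL-Analysis.Analysis"
begin

definition monotone_op :: "('a::real_inner \<Rightarrow> 'a set) \<Rightarrow> bool" where
  "monotone_op A \<longleftrightarrow>
     (\<forall>x y u v. u \<in> A x \<longrightarrow> v \<in> A y \<longrightarrow> inner (x - y) (u - v) \<ge> 0)"

definition maximal_monotone :: "('a::real_inner \<Rightarrow> 'a set) \<Rightarrow> bool" where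
  "maximal_monotone A \<longleftrightarrow> monotone_op A \<and>
     (\<forall>B. monotone_op B \<and> (\<forall>x. A x \<subseteq> B x) \<longrightarrow> B = A)"

definition zeros :: "('a::real_inner \<Rightarrow> 'a set) \<Rightarrow> 'a set" where
  "zeros A = {x. 0 \<in> A x}"

text \<open>Resolvent J = (Id + A)^{-1}: J x is the (unique, for maximal monotone A)
  y with x \<in> y + A y, i.e. x - y \<in> A y.\<close>
definition resolvent :: "('a::real_inner \<Rightarrow> 'a set) \<Rightarrow> 'a \<Rightarrow> 'a" where
  "resolvent A x = (THE y. x - y \<in> A y)"

definition w_fun :: "(nat \<Rightarrow> nat) \<Rightarrow> nat \<Rightarrow> nat \<Rightarrow> nat" where
  "w_fun f N m = max (f (24 * N * (m + 1)^2)) (24 * N * (m + 1)^2)"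

end

theory Submission
  imports Defs
begin



lemma small_t_nonneg:
  fixes \<alpha> \<beta> :: real
  assumes "\<beta> \<ge> 0" and "\<And>t. 0 < t \<Longrightarrow> t \<le> 1 \<Longrightarrow> t * \<alpha> + t^2 * \<beta> \<ge> 0"
  shows "\<alpha> \<ge> 0"
proof (rule ccontr)
  assume "\<not> \<alpha> \<ge> 0"
  hence a: "\<alpha> < 0" by simp
  define t where "t = min 1 (-\<alpha> / (2*(\<beta>+1)))"
  have t0: "t > 0" using a assms(1) by (simp add: t_def field_simps)
  have t1: "t \<le> 1" by (simp add: t_def)
  have "t * \<beta> \<le> (-\<alpha> / (2*(\<beta>+1))) * \<beta>"
    using assms(1) by (intro mult_right_mono) (auto simp: t_def)
  also have "\<dots> \<le> -\<alpha>/2"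
  proof -
    have "(-\<alpha> / (2*(\<beta>+1))) * \<beta> = (-\<alpha>/2) * (\<beta>/(\<beta>+1))" by (simp add: field_simps)
    also have "\<dots> \<le> (-\<alpha>/2) * 1"
      using a assms(1) by (intro mult_left_mono) auto
    finally show ?thesis by simp
  qed
  finally have "\<alpha> + t*\<beta> < 0" using a by linarith
  hence "t * (\<alpha> + t*\<beta>) < 0" using t0 by (simp add: mult_pos_neg)
  moreover have "t * (\<alpha> + t*\<beta>) = t * \<alpha> + t^2 * \<beta>" by (simp add: algebra_simps power2_eq_square)
  ultimately show False using assms(2)[OF t0 t1] by linarith
qed

lemma vec_id: fixes a b y v :: "'a::real_inner" and t :: real
  shows "(1/2) *\<^sub>R (((1 - t) *\<^sub>R a + t *\<^sub>R y) - ((1 - t) *\<^sub>R b + t *\<^sub>R v)) = (1/2) *\<^sub>R (a - b) + t *\<^sub>R ((1/2) *\<^sub>R (y - v) - (1/2) *\<^sub>R (a - b))"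
  by (simp add: algebra_simps)

lemma norm_expand: fixes w d :: "'a::real_inner" and t :: real
  shows "(norm (w + t *\<^sub>R d))^2 = (norm w)^2 + 2 * t * inner w d + t^2 * (norm d)^2"
  unfolding power2_norm_eq_inner
  by (simp add: inner_add_left inner_add_right inner_commute algebra_simps power2_eq_square)

lemma finite_case:
  fixes F :: "('a::real_inner \<times> 'a) set"
  assumes fin: "finite F"
    and mon: "\<And>y v y' v'. (y,v) \<in> F \<Longrightarrow> (y',v') \<in> F \<Longrightarrow> inner (y - y') (v - v') \<ge> 0"
  shows "\<exists>x. \<forall>(y,v)\<in>F. inner (x - y) (x + v) \<le> 0"
proof (cases "F = {}")
  case True then show ?thesis by simp
next
  case False
  define Q where "Q = (\<lambda>(y,v). (y, v, inner y v)) ` F"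
  define H where "H = convex hull Q"
  define \<psi> where "\<psi> = (\<lambda>q::'a\<times>'a\<times>real. (norm ((1/2) *\<^sub>R (fst q - fst (snd q))))^2 + snd (snd q))"
  have finQ: "finite Q" using fin by (simp add: Q_def)
  have "compact H" unfolding H_def by (rule finite_imp_compact_convex_hull[OF finQ])
  moreover have "H \<noteq> {}" using False by (simp add: H_def Q_def)
  moreover have "continuous_on H \<psi>" unfolding \<psi>_def by (intro continuous_intros)
  ultimately have "\<exists>q\<in>H. \<forall>z\<in>H. \<psi> q \<le> \<psi> z"
    by (rule continuous_attains_inf)
  then obtain q where qH: "q \<in> H" and qmin: "\<And>z. z \<in> H \<Longrightarrow> \<psi> q \<le> \<psi> z"
    by blast
  obtain a b s where qdef: "q = (a,b,s)" by (cases q) auto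
  define w where "w = (1/2) *\<^sub>R (a - b)"
  have claim1: "(norm w)^2 + s \<ge> 0"
  proof -
    obtain u where u0: "\<forall>x\<in>Q. 0 \<le> u x" and u1: "sum u Q = 1"
      and us: "(\<Sum>x\<in>Q. u x *\<^sub>R x) = q"
      using qH finQ unfolding H_def convex_hull_finite[OF finQ] by blast
    define Y where "Y = (\<Sum>x\<in>Q. u x *\<^sub>R fst x)"
    define V where "V = (\<Sum>x\<in>Q. u x *\<^sub>R fst (snd x))"
    have aY: "a = Y" using arg_cong[OF us, of fst] by (simp add: qdef Y_def fst_sum)
    have bV: "b = V" using arg_cong[OF us, of "\<lambda>x. fst (snd x)"] by (simp add: qdef V_def fst_sum snd_sum)
    have sS: "s = (\<Sum>x\<in>Q. u x * inner (fst x) (fst (snd x)))"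
    proof -
      have "s = (\<Sum>x\<in>Q. u x * snd (snd x))" using arg_cong[OF us, of "\<lambda>x. snd (snd x)"] by (simp add: qdef snd_sum)
      also have "\<dots> = (\<Sum>x\<in>Q. u x * inner (fst x) (fst (snd x)))"
        by (rule sum.cong) (auto simp: Q_def)
      finally show ?thesis .
    qed
    have "0 \<le> (\<Sum>x\<in>Q. \<Sum>x'\<in>Q. u x * u x' * inner (fst x - fst x') (fst (snd x) - fst (snd x')))"
    proof (intro sum_nonneg)
      fix x x' assume "x \<in> Q" "x' \<in> Q"
      then show "0 \<le> u x * u x' * inner (fst x - fst x') (fst (snd x) - fst (snd x'))"
        using u0 mon unfolding Q_def by (auto intro!: mult_nonneg_nonneg)
    qed
    also have "\<dots> = 2 * s - 2 * inner Y V"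
    proof -
      have "(\<Sum>x\<in>Q. \<Sum>x'\<in>Q. u x * u x' * inner (fst x - fst x') (fst (snd x) - fst (snd x')))
        = (\<Sum>x\<in>Q. \<Sum>x'\<in>Q. u x' * (u x * inner (fst x) (fst (snd x)))
             + u x * (u x' * inner (fst x') (fst (snd x')))
             - u x * u x' * inner (fst x) (fst (snd x'))
             - u x' * u x * inner (fst x') (fst (snd x)))"
        by (intro sum.cong refl) (simp add: inner_diff_left inner_diff_right algebra_simps)
      also have "\<dots> = (\<Sum>x\<in>Q. \<Sum>x'\<in>Q. u x' * (u x * inner (fst x) (fst (snd x))))
             + (\<Sum>x\<in>Q. \<Sum>x'\<in>Q. u x * (u x' * inner (fst x') (fst (snd x'))))
             - (\<Sum>x\<in>Q. \<Sum>x'\<in>Q. u x * u x' * inner (fst x) (fst (snd x')))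
             - (\<Sum>x\<in>Q. \<Sum>x'\<in>Q. u x' * u x * inner (fst x') (fst (snd x)))"
        by (simp only: sum.distrib sum_subtractf)
      also have "\<dots> = 2 * s - 2 * inner Y V"
      proof -
        have h1: "(\<Sum>x\<in>Q. \<Sum>x'\<in>Q. u x * u x' * inner (fst x) (fst (snd x'))) = inner Y V"
        proof -
          have "inner Y V = (\<Sum>x\<in>Q. u x * inner (fst x) V)"
            unfolding Y_def by (simp only: inner_sum_left inner_scaleR_left)
          also have "\<dots> = (\<Sum>x\<in>Q. u x * (\<Sum>x'\<in>Q. u x' * inner (fst x) (fst (snd x'))))"
            unfolding V_def by (simp only: inner_sum_right inner_scaleR_right)
          also have "\<dots> = (\<Sum>x\<in>Q. \<Sum>x'\<in>Q. u x * u x' * inner (fst x) (fst (snd x')))"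
            by (simp only: sum_distrib_left mult.assoc)
          finally show ?thesis by simp
        qed
        have h2: "(\<Sum>x\<in>Q. \<Sum>x'\<in>Q. u x' * u x * inner (fst x') (fst (snd x))) = inner Y V"
        proof -
          have "(\<Sum>x\<in>Q. \<Sum>x'\<in>Q. u x' * u x * inner (fst x') (fst (snd x)))
             = (\<Sum>x'\<in>Q. \<Sum>x\<in>Q. u x' * u x * inner (fst x') (fst (snd x)))" by (rule sum.swap)
          also have "\<dots> = inner Y V" by (rule h1)
          finally show ?thesis .
        qed
        have h3: "(\<Sum>x\<in>Q. \<Sum>x'\<in>Q. u x' * (u x * inner (fst x) (fst (snd x)))) = s"
          by (simp add: sum_distrib_right[symmetric] u1 sS)
        have h4: "(\<Sum>x\<in>Q. \<Sum>x'\<in>Q. u x * (u x' * inner (fst x') (fst (snd x')))) = s"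
        proof -
          have "(\<Sum>x\<in>Q. \<Sum>x'\<in>Q. u x * (u x' * inner (fst x') (fst (snd x'))))
              = (\<Sum>x\<in>Q. u x * (\<Sum>x'\<in>Q. u x' * inner (fst x') (fst (snd x'))))"
            by (simp only: sum_distrib_left)
          also have "\<dots> = (\<Sum>x\<in>Q. u x) * (\<Sum>x'\<in>Q. u x' * inner (fst x') (fst (snd x')))"
            by (simp only: sum_distrib_right)
          finally show ?thesis by (simp add: u1 sS)
        qed
        show ?thesis using h1 h2 h3 h4 by simp
      qed
      finally show ?thesis .
    qed
    finally have sYV: "s \<ge> inner Y V" by simp
    have "(norm w)^2 + inner Y V = (norm ((1/2) *\<^sub>R (Y + V)))^2"
      by (simp add: w_def aY bV power2_norm_eq_inner inner_add_left inner_add_right inner_diff_left inner_diff_right inner_commute algebra_simps)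
    then show ?thesis using sYV by (smt (verit) zero_le_power2)
  qed
  show ?thesis
  proof (intro exI ballI)
    fix yv assume yvF: "yv \<in> F"
    obtain y v where yv: "yv = (y,v)" by (cases yv) auto
    define wj where "wj = (1/2) *\<^sub>R (y - v)"
    have "(y, v, inner y v) \<in> Q" using yvF yv unfolding Q_def by force
    hence qj: "(y, v, inner y v) \<in> H" unfolding H_def by (rule hull_inc)
    have "2 * inner w (wj - w) + inner y v - s \<ge> 0"
    proof (rule small_t_nonneg[where \<beta> = "(norm (wj - w))^2"])
      fix t :: real assume t: "0 < t" "t \<le> 1"
      have "(1 - t) *\<^sub>R q + t *\<^sub>R (y, v, inner y v) \<in> H"
        using qH qj t unfolding H_def by (intro convexD[OF convex_convex_hull]) auto
      from qmin[OF this] have le: "\<psi> q \<le> \<psi> ((1 - t) *\<^sub>R q + t *\<^sub>R (y, v, inner y v))" .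
      have e1: "(1 - t) *\<^sub>R q + t *\<^sub>R (y, v, inner y v)
         = ((1 - t) *\<^sub>R a + t *\<^sub>R y, (1 - t) *\<^sub>R b + t *\<^sub>R v, (1 - t) * s + t * inner y v)"
        by (simp add: qdef)
      have e2: "(1/2) *\<^sub>R (((1 - t) *\<^sub>R a + t *\<^sub>R y) - ((1 - t) *\<^sub>R b + t *\<^sub>R v)) = w + t *\<^sub>R (wj - w)"
        unfolding w_def wj_def by (rule vec_id)
      have e3: "\<psi> ((1 - t) *\<^sub>R q + t *\<^sub>R (y, v, inner y v))
          = (norm (w + t *\<^sub>R (wj - w)))^2 + ((1 - t) * s + t * inner y v)"
        unfolding e1 \<psi>_def using e2 by simp
      have e4: "(norm (w + t *\<^sub>R (wj - w)))^2 = (norm w)^2 + 2 * t * inner w (wj - w) + t^2 * (norm (wj - w))^2"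
        by (rule norm_expand)
      have e5: "\<psi> q = (norm w)^2 + s" by (simp add: \<psi>_def qdef w_def)
      have e6: "t * (2 * inner w (wj - w) + inner y v - s) = 2 * t * inner w (wj - w) + t * inner y v - t * s"
        by (simp add: algebra_simps)
      have e7: "(1 - t) * s = s - t * s" by (simp add: algebra_simps)
      show "0 \<le> t * (2 * inner w (wj - w) + inner y v - s) + t^2 * (norm (wj - w))^2"
        using le e3 e4 e5 e6 e7 by linarith
    qed simp
    moreover have "inner (w - y) (w + v) = (norm w)^2 - 2 * inner w wj - inner y v"
      by (simp add: wj_def power2_norm_eq_inner inner_add_left inner_add_right inner_diff_left inner_diff_right inner_commute algebra_simps)
    moreover have "inner w (wj - w) = inner w wj - (norm w)^2"
      by (simp add: power2_norm_eq_inner inner_diff_right)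
    ultimately have "inner (w - y) (w + v) \<le> 0" using claim1 by linarith
    then show "case yv of (y, v) \<Rightarrow> inner (w - y) (w + v) \<le> 0" by (simp add: yv)
  qed
qed




lemma K_ball:
  fixes x y v :: "'a::real_inner"
  shows "{x. inner (x - y) (x + v) \<le> 0} = cball ((1/2) *\<^sub>R (y - v)) (norm (y + v) / 2)"
proof -
  have id: "(norm (x - (1/2) *\<^sub>R (y - v)))^2 - (norm (y + v) / 2)^2 = inner (x - y) (x + v)" for x
    unfolding power2_norm_eq_inner power_divide
    by (simp add: inner_add_left inner_add_right inner_diff_left inner_diff_right inner_commute algebra_simps)
  have "inner (x - y) (x + v) \<le> 0 \<longleftrightarrow> dist ((1/2) *\<^sub>R (y - v)) x \<le> norm (y + v) / 2" for x
  proof -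
    have "dist ((1/2) *\<^sub>R (y - v)) x = norm (x - (1/2) *\<^sub>R (y - v))" by (simp add: dist_norm norm_minus_commute)
    moreover have "norm (x - (1/2) *\<^sub>R (y - v)) \<le> norm (y + v) / 2 \<longleftrightarrow>
       (norm (x - (1/2) *\<^sub>R (y - v)))^2 \<le> (norm (y + v) / 2)^2"
      by (rule power_mono_iff[symmetric]) auto
    ultimately show ?thesis using id[of x] by linarith
  qed
  then show ?thesis by (auto simp: cball_def)
qed

lemma key_est:
  fixes a b :: "'a::real_inner" and C :: "'a set"
  assumes "convex C" "a \<in> C" "b \<in> C" "\<And>z. z \<in> C \<Longrightarrow> \<rho> \<le> norm z" "0 \<le> \<rho>" "rs - e \<le> \<rho>"
    "norm a \<le> rs + e" "norm b \<le> rs + e" "0 < e" "0 \<le> rs"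
  shows "(norm (a - b))^2 \<le> 16 * e * (rs + e)"
proof -
  have mC: "(1/2) *\<^sub>R a + (1/2) *\<^sub>R b \<in> C"
    using assms(1,2,3) by (intro convexD) auto
  have pl: "(norm (a - b))^2 + (norm ((1/2) *\<^sub>R a + (1/2) *\<^sub>R b))^2 * 4 = 2 * (norm a)^2 + 2 * (norm b)^2"
    unfolding power2_norm_eq_inner
    by (simp add: inner_add_left inner_add_right inner_diff_left inner_diff_right inner_commute algebra_simps)
  have "\<rho> \<le> norm ((1/2) *\<^sub>R a + (1/2) *\<^sub>R b)" using assms(4)[OF mC] .
  hence m2: "\<rho>^2 \<le> (norm ((1/2) *\<^sub>R a + (1/2) *\<^sub>R b))^2" using assms(5) by (simp add: power_mono)
  have a2: "(norm a)^2 \<le> (rs + e)^2" using assms(7) by (simp add: power_mono)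
  have b2: "(norm b)^2 \<le> (rs + e)^2" using assms(8) by (simp add: power_mono)
  have D: "(norm (a - b))^2 \<le> 4 * (rs + e)^2 - 4 * \<rho>^2" using pl m2 a2 b2 by linarith
  show ?thesis
  proof (cases "rs - e \<ge> 0")
    case True
    hence "(rs - e)^2 \<le> \<rho>^2" using assms(6) by (simp add: power_mono)
    moreover have "4 * (rs + e)^2 - 4 * (rs - e)^2 = 16 * e * rs" by (simp add: power2_eq_square algebra_simps)
    moreover have "16 * e * rs \<le> 16 * e * (rs + e)" using assms(9) by simp
    ultimately show ?thesis using D by linarith
  next
    case False
    have "4 * (rs + e)^2 \<le> 16 * e * (rs + e)"
    proof -
      have "(rs + e) * (rs + e) \<le> (4 * e) * (rs + e)"
        using False assms(9,10) by (intro mult_right_mono) auto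
      then show ?thesis by (simp add: power2_eq_square algebra_simps)
    qed
    moreover have "0 \<le> \<rho>^2" by simp
    ultimately show ?thesis using D by linarith
  qed
qed




lemma inf_case:
  fixes G :: "('a::{real_inner,complete_space} \<times> 'a) set"
  assumes mon: "\<And>y v y' v'. (y,v) \<in> G \<Longrightarrow> (y',v') \<in> G \<Longrightarrow> inner (y - y') (v - v') \<ge> 0"
  shows "\<exists>x. \<forall>(y,v)\<in>G. inner (x - y) (x + v) \<le> 0"
proof (cases "G = {}")
  case True then show ?thesis by simp
next
  case False
  then obtain g0 where g0: "g0 \<in> G" by blast
  define K where "K = (\<lambda>g::'a\<times>'a. {x. inner (x - fst g) (x + snd g) \<le> 0})"
  define C where "C = (\<lambda>F. \<Inter> (K ` F))"
  define Fs where "Fs = {F. finite F \<and> F \<subseteq> G \<and> g0 \<in> F}"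
  define r where "r F = Inf (norm ` C F)" for F
  define B where "B = norm ((1/2) *\<^sub>R (fst g0 - snd g0)) + norm (fst g0 + snd g0) / 2"
  have Kball: "K g = cball ((1/2) *\<^sub>R (fst g - snd g)) (norm (fst g + snd g) / 2)" for g
    unfolding K_def by (rule K_ball)
  have Kcc: "closed (K g) \<and> convex (K g)" for g unfolding Kball by simp
  have Cconv: "convex (C F)" for F unfolding C_def using Kcc by (intro convex_Inter) auto
  have Cne: "C F \<noteq> {}" if "F \<in> Fs" for F
  proof -
    have "finite F" "F \<subseteq> G" using that by (auto simp: Fs_def)
    then obtain x where "\<forall>(y,v)\<in>F. inner (x - y) (x + v) \<le> 0"
      using finite_case[of F] mon by blast
    then have "x \<in> C F" by (auto simp: C_def K_def)
    then show ?thesis by blast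
  qed
  have Cbd: "norm x \<le> B" if "F \<in> Fs" "x \<in> C F" for F x
  proof -
    have "x \<in> K g0" using that by (auto simp: C_def Fs_def)
    then have "dist ((1/2) *\<^sub>R (fst g0 - snd g0)) x \<le> norm (fst g0 + snd g0) / 2"
      by (simp add: Kball)
    then show ?thesis unfolding B_def dist_norm
      using norm_triangle_ineq2[of x "(1/2) *\<^sub>R (fst g0 - snd g0)"] norm_minus_commute[of x]
      by (smt (verit) norm_minus_commute)
  qed
  have Cmono: "C F' \<subseteq> C F" if "F \<subseteq> F'" for F F' using that by (auto simp: C_def)
  have r_lower: "r F \<le> norm x" if "x \<in> C F" for F x
    unfolding r_def by (rule cInf_lower) (use that in \<open>auto intro!: bdd_belowI2[where m=0]\<close>)
  have r_nonneg: "0 \<le> r F" if "F \<in> Fs" for F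
    unfolding r_def using Cne[OF that] by (intro cInf_greatest) auto
  have r_le_B: "r F \<le> B" if FF: "F \<in> Fs" for F
  proof -
    obtain x where "x \<in> C F" using Cne[OF FF] by blast
    then show ?thesis using r_lower Cbd FF by (meson order_trans)
  qed
  have r_mono: "r F \<le> r F'" if "F \<subseteq> F'" "F' \<in> Fs" for F F'
  proof -
    have "r F \<le> norm x" if "x \<in> C F'" for x using r_lower Cmono \<open>F \<subseteq> F'\<close> that by blast
    then show ?thesis unfolding r_def[of F'] using Cne[OF \<open>F' \<in> Fs\<close>]
      by (intro cInf_greatest) auto
  qed
  have r_approx: "\<exists>x\<in>C F. norm x < r F + e" if "F \<in> Fs" "e > 0" for F e
  proof -
    have "Inf (norm ` C F) < r F + e" using that by (simp add: r_def)
    moreover have "bdd_below (norm ` C F)" by (auto intro!: bdd_belowI2[where m=0])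
    ultimately show ?thesis using Cne[OF \<open>F \<in> Fs\<close>] by (subst (asm) cInf_less_iff) auto
  qed
  define rs where "rs = Sup (r ` Fs)"
  have Fs_ne: "Fs \<noteq> {}" using g0 by (auto simp: Fs_def intro!: exI[of _ "{g0}"])
  have bddr: "bdd_above (r ` Fs)" by (rule bdd_aboveI2[where M=B]) (rule r_le_B)
  have r_le_rs: "r F \<le> rs" if "F \<in> Fs" for F unfolding rs_def using bddr that by (intro cSup_upper) auto
  have rs_nonneg: "0 \<le> rs" using r_le_rs r_nonneg Fs_ne by (meson all_not_in_conv order_trans)
  have rs_approx: "\<exists>F\<in>Fs. rs - e < r F" if "e > 0" for e
  proof -
    have "rs - e < Sup (r ` Fs)" using that by (simp add: rs_def)
    then show ?thesis using Fs_ne bddr by (subst (asm) less_cSup_iff) auto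
  qed
  define \<epsilon> where "\<epsilon> = (\<lambda>n::nat. inverse (real (Suc n)))"
  have \<epsilon>pos: "\<epsilon> n > 0" for n by (simp add: \<epsilon>_def)
  have \<epsilon>anti: "\<epsilon> m \<le> \<epsilon> n" if "n \<le> m" for m n using that by (simp add: \<epsilon>_def field_simps)
  have \<epsilon>le1: "\<epsilon> n \<le> 1" for n by (simp add: \<epsilon>_def field_simps)
  have "\<forall>n. \<exists>F. F \<in> Fs \<and> rs - \<epsilon> n < r F" using rs_approx \<epsilon>pos by blast
  then obtain Fn where Fn: "\<And>n. Fn n \<in> Fs \<and> rs - \<epsilon> n < r (Fn n)"
    using choice by metis
  define Gn where "Gn = (\<lambda>n. \<Union> (Fn ` {..n}))"
  have Gn_Fs: "Gn n \<in> Fs" for n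
    using Fn unfolding Gn_def Fs_def by auto
  have Gn_mono: "Gn n \<subseteq> Gn m" if "n \<le> m" for n m using that unfolding Gn_def by (auto intro: le_trans)
  have Gn_r: "rs - \<epsilon> n < r (Gn n)" for n
  proof -
    have "Fn n \<subseteq> Gn n" unfolding Gn_def by auto
    then show ?thesis using Fn[of n] r_mono Gn_Fs by (meson less_le_trans)
  qed
  have approx2: "\<exists>x\<in>C F. norm x < rs + \<epsilon> n" if FF: "F \<in> Fs" for F n
  proof -
    obtain x where "x \<in> C F" "norm x < r F + \<epsilon> n" using r_approx[OF FF \<epsilon>pos[of n]] by blast
    then show ?thesis using r_le_rs[OF FF] by (intro bexI[of _ x]) auto
  qed
  have "\<forall>n. \<exists>x. x \<in> C (Gn n) \<and> norm x < rs + \<epsilon> n" using approx2[OF Gn_Fs] by blast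
  then obtain xs where xs: "\<And>n. xs n \<in> C (Gn n) \<and> norm (xs n) < rs + \<epsilon> n"
    using choice by metis
  have est: "(norm (a - b))^2 \<le> 16 * \<epsilon> n * (rs + 1)"
    if "a \<in> C (Gn n)" "b \<in> C (Gn n)" "norm a \<le> rs + \<epsilon> n" "norm b \<le> rs + \<epsilon> n" for a b n
  proof -
    have "(norm (a - b))^2 \<le> 16 * \<epsilon> n * (rs + \<epsilon> n)"
      by (rule key_est[OF Cconv that(1,2) r_lower r_nonneg[OF Gn_Fs] _ that(3,4) \<epsilon>pos rs_nonneg])
         (use Gn_r[of n] in auto)
    also have "\<dots> \<le> 16 * \<epsilon> n * (rs + 1)" using \<epsilon>le1[of n] \<epsilon>pos[of n] by (intro mult_left_mono) auto
    finally show ?thesis .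
  qed
  define \<beta> where "\<beta> = (\<lambda>n. sqrt (16 * \<epsilon> n * (rs + 1)))"
  have \<beta>: "norm (a - b) \<le> \<beta> n"
    if "a \<in> C (Gn n)" "b \<in> C (Gn n)" "norm a \<le> rs + \<epsilon> n" "norm b \<le> rs + \<epsilon> n" for a b n
    unfolding \<beta>_def by (rule real_le_rsqrt) (rule est[OF that])
  have \<beta>lim: "\<beta> \<longlonglongrightarrow> 0"
  proof -
    have "(\<lambda>n. sqrt (16 * \<epsilon> n * (rs + 1))) \<longlonglongrightarrow> sqrt (16 * 0 * (rs + 1))"
      unfolding \<epsilon>_def by (intro tendsto_intros LIMSEQ_inverse_real_of_nat)
    then show ?thesis by (simp add: \<beta>_def)
  qed
  have \<beta>anti: "\<beta> m \<le> \<beta> n" if "n \<le> m" for m n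
    unfolding \<beta>_def using \<epsilon>anti[OF that] rs_nonneg by (intro real_sqrt_le_mono mult_right_mono) auto
  have xs_close: "norm (xs m - xs n) \<le> \<beta> n" if "n \<le> m" for m n
  proof (rule \<beta>)
    show "xs m \<in> C (Gn n)" using xs[of m] Cmono[OF Gn_mono[OF that]] by blast
    show "xs n \<in> C (Gn n)" using xs by blast
    show "norm (xs m) \<le> rs + \<epsilon> n" using xs[of m] \<epsilon>anti[OF that] by fastforce
    show "norm (xs n) \<le> rs + \<epsilon> n" using xs[of n] by fastforce
  qed
  have "Cauchy xs"
  proof (rule CauchyI)
    fix e :: real assume "0 < e"
    then obtain M where M: "\<forall>n\<ge>M. norm (\<beta> n - 0) < e"
      using \<beta>lim unfolding LIMSEQ_iff by blast
    show "\<exists>M. \<forall>m\<ge>M. \<forall>n\<ge>M. norm (xs m - xs n) < e"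
    proof (intro exI allI impI)
      fix m n assume "M \<le> m" "M \<le> n"
      show "norm (xs m - xs n) < e"
      proof (cases "n \<le> m")
        case True
        then show ?thesis using xs_close[OF True] M \<open>M \<le> n\<close> by fastforce
      next
        case False
        then have "norm (xs n - xs m) \<le> \<beta> m" using xs_close by simp
        then show ?thesis using M \<open>M \<le> m\<close> by (fastforce simp: norm_minus_commute)
      qed
    qed
  qed
  then obtain xstar where xlim: "xs \<longlonglongrightarrow> xstar" using Cauchy_convergent_iff convergent_def by blast
  show ?thesis
  proof (intro exI ballI)
    fix g assume gG: "g \<in> G"
    define Hn where "Hn = (\<lambda>n. insert g (Gn n))"
    have Hn_Fs: "Hn n \<in> Fs" for n using Gn_Fs[of n] gG by (simp add: Hn_def Fs_def)
    have "\<forall>n. \<exists>x. x \<in> C (Hn n) \<and> norm x < rs + \<epsilon> n" using approx2[OF Hn_Fs] by blast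
    then obtain zs where zs: "\<And>n. zs n \<in> C (Hn n) \<and> norm (zs n) < rs + \<epsilon> n"
      using choice by metis
    have zK: "zs n \<in> K g" for n using zs[of n] by (simp add: C_def Hn_def)
    have zC: "zs n \<in> C (Gn n)" for n using zs[of n] Cmono[of "Gn n" "Hn n"] by (auto simp: Hn_def)
    have zx: "norm (zs n - xs n) \<le> \<beta> n" for n
      using \<beta>[OF zC[of n], of "xs n"] xs[of n] zs[of n] by fastforce
    have "(\<lambda>n. zs n - xs n) \<longlonglongrightarrow> 0"
    proof (rule tendsto_norm_zero_cancel)
      show "(\<lambda>n. norm (zs n - xs n)) \<longlonglongrightarrow> 0"
        by (rule tendsto_sandwich[of "\<lambda>_. 0" _ _ \<beta>]) (use zx \<beta>lim in auto)
    qed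
    then have "(\<lambda>n. (zs n - xs n) + xs n) \<longlonglongrightarrow> 0 + xstar" by (intro tendsto_add xlim)
    then have "zs \<longlonglongrightarrow> xstar" by simp
    then have "xstar \<in> K g" using Kcc zK by (intro Lim_in_closed_set[of "K g" zs]) auto
    then show "case g of (y, v) \<Rightarrow> inner (xstar - y) (xstar + v) \<le> 0"
      by (cases g) (simp add: K_def)
  qed
qed




lemma minty:
  fixes A :: "'a::{real_inner,complete_space} \<Rightarrow> 'a set"
  assumes mm: "maximal_monotone A"
  shows "\<exists>x. z - x \<in> A x"
proof -
  have mon: "monotone_op A" using mm by (simp add: maximal_monotone_def)
  define G where "G = {(y, v - z) | y v. v \<in> A y}"
  have "\<exists>x. \<forall>(y,v)\<in>G. inner (x - y) (x + v) \<le> 0"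
  proof (rule inf_case)
    fix y v y' v' assume "(y, v) \<in> G" "(y', v') \<in> G"
    then obtain v1 v1' where "v = v1 - z" "v1 \<in> A y" "v' = v1' - z" "v1' \<in> A y'"
      by (auto simp: G_def)
    then show "0 \<le> inner (y - y') (v - v')" using mon by (simp add: monotone_op_def)
  qed
  then obtain x where x: "\<And>y v. v \<in> A y \<Longrightarrow> inner (x - y) (x + (v - z)) \<le> 0"
    by (auto simp: G_def)
  define B where "B = (\<lambda>w. if w = x then insert (z - x) (A w) else A w)"
  have "monotone_op B"
    unfolding monotone_op_def
  proof (intro allI impI)
    fix a b u v assume u: "u \<in> B a" and v: "v \<in> B b"
    show "0 \<le> inner (a - b) (u - v)"
    proof (cases "a = x \<and> u = z - x")
      case True
      note T = True
      show ?thesis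
      proof (cases "b = x \<and> v = z - x")
        case True then show ?thesis using T by simp
      next
        case False
        then have "v \<in> A b" using v by (auto simp: B_def split: if_splits)
        from x[OF this] have "inner (x - b) (x + (v - z)) \<le> 0" .
        moreover have "inner (a - b) (u - v) = - inner (x - b) (x + (v - z))"
        proof -
          have "a = x" "u = z - x" using T by auto
          then show ?thesis unfolding \<open>a = x\<close> \<open>u = z - x\<close>
            by (simp add: inner_diff_right inner_add_right inner_diff_left inner_commute algebra_simps)
        qed
        ultimately show ?thesis by simp
      qed
    next
      case False
      then have uA: "u \<in> A a" using u by (auto simp: B_def split: if_splits)
      show ?thesis
      proof (cases "b = x \<and> v = z - x")
        case True
        from x[OF uA] have "inner (x - a) (x + (u - z)) \<le> 0" .
        moreover have "inner (a - b) (u - v) = - inner (x - a) (x + (u - z))"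
        proof -
          have "b = x" "v = z - x" using True by auto
          then show ?thesis unfolding \<open>b = x\<close> \<open>v = z - x\<close>
            by (simp add: inner_diff_right inner_add_right inner_diff_left inner_commute algebra_simps)
        qed
        ultimately show ?thesis by simp
      next
        case False
        then have "v \<in> A b" using v by (auto simp: B_def split: if_splits)
        then show ?thesis using uA mon by (simp add: monotone_op_def)
      qed
    qed
  qed
  moreover have "\<forall>w. A w \<subseteq> B w" by (auto simp: B_def)
  ultimately have "B = A" using mm by (simp add: maximal_monotone_def)
  then have "z - x \<in> A x" by (metis B_def insertI1)
  then show ?thesis by blast
qed

lemma res_unique:
  assumes mon: "monotone_op A" and "z - a \<in> A a" "z - b \<in> A b"
  shows "a = b"
proof -
  have "0 \<le> inner (a - b) ((z - a) - (z - b))" using mon assms(2,3) unfolding monotone_op_def by blast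
  moreover have e: "(z - a) - (z - b) = - (a - b)" by simp
  have "inner (a - b) ((z - a) - (z - b)) = - inner (a - b) (a - b)" unfolding e by (rule inner_minus_right)
  ultimately have "inner (a - b) (a - b) \<le> 0" by linarith
  then have "inner (a - b) (a - b) = 0" using inner_ge_zero[of "a - b"] by linarith
  then show ?thesis by simp
qed

lemma res_prop:
  fixes A :: "'a::{real_inner,complete_space} \<Rightarrow> 'a set"
  assumes mm: "maximal_monotone A"
  shows "z - resolvent A z \<in> A (resolvent A z)"
proof -
  have mon: "monotone_op A" using mm by (simp add: maximal_monotone_def)
  have "\<exists>!y. z - y \<in> A y" using minty[OF mm, of z] res_unique[OF mon] by blast
  then show ?thesis unfolding resolvent_def by (rule theI')
qed

lemma res_zero:
  assumes mon: "monotone_op A" and "p \<in> zeros A"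
  shows "resolvent A p = p"
proof -
  have "p - p \<in> A p" using assms by (simp add: zeros_def)
  moreover have "\<And>y. p - y \<in> A y \<Longrightarrow> y = p" using res_unique[OF mon] calculation by blast
  ultimately show ?thesis unfolding resolvent_def by (rule the_equality)
qed

lemma res_nonexp:
  fixes A :: "'a::{real_inner,complete_space} \<Rightarrow> 'a set"
  assumes mm: "maximal_monotone A"
  shows "norm (resolvent A x - resolvent A y) \<le> norm (x - y)"
proof -
  have mon: "monotone_op A" using mm by (simp add: maximal_monotone_def)
  define a where "a = resolvent A x"
  define b where "b = resolvent A y"
  have "0 \<le> inner (a - b) ((x - a) - (y - b))"
    using res_prop[OF mm, of x] res_prop[OF mm, of y] mon unfolding a_def b_def monotone_op_def by blast
  also have "inner (a - b) ((x - a) - (y - b)) = inner (a - b) (x - y) - inner (a - b) (a - b)"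
    by (simp add: inner_diff_right algebra_simps)
  finally have "(norm (a - b))^2 \<le> inner (a - b) (x - y)" by (simp add: power2_norm_eq_inner)
  also have "\<dots> \<le> norm (a - b) * norm (x - y)" by (rule norm_cauchy_schwarz)
  finally have h: "norm (a - b) * norm (a - b) \<le> norm (a - b) * norm (x - y)" by (simp add: power2_eq_square)
  show ?thesis
  proof (cases "norm (a - b) = 0")
    case True then show ?thesis by (simp add: a_def b_def)
  next
    case False
    then have "norm (a - b) > 0" by simp
    with h show ?thesis unfolding a_def b_def by simp
  qed
qed

lemma convex_comb_norm:
  fixes a b :: "'a::real_inner" and t :: real
  shows "(norm ((1 - t) *\<^sub>R a + t *\<^sub>R b))^2 = (1 - t) * (norm a)^2 + t * (norm b)^2 - t * (1 - t) * (norm (b - a))^2"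
  unfolding power2_norm_eq_inner
  by (simp add: inner_add_left inner_add_right inner_diff_left inner_diff_right inner_commute algebra_simps)

lemma combo:
  fixes J :: "'a::real_inner \<Rightarrow> 'a"
  assumes ne: "\<And>a b. norm (J a - J b) \<le> norm (a - b)"
    and ex: "norm (J x - x) \<le> e" and ey: "norm (J y - y) \<le> e" and t: "0 \<le> t" "t \<le> 1"
  shows "(norm (J ((1 - t) *\<^sub>R x + t *\<^sub>R y) - ((1 - t) *\<^sub>R x + t *\<^sub>R y)))^2 \<le> norm (x - y) * e + e^2"
proof -
  define z where "z = (1 - t) *\<^sub>R x + t *\<^sub>R y"
  define u where "u = J z"
  define D where "D = norm (x - y)"
  have e0: "0 \<le> e" using ex by (meson norm_ge_zero order_trans)
  have zx: "norm (z - x) = t * D"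
  proof -
    have "z - x = t *\<^sub>R (y - x)" by (simp add: z_def algebra_simps)
    then show ?thesis using t by (simp add: D_def norm_minus_commute)
  qed
  have zy: "norm (z - y) = (1 - t) * D"
  proof -
    have "z - y = (1 - t) *\<^sub>R (x - y)" by (simp add: z_def algebra_simps)
    then show ?thesis using t by (simp add: D_def)
  qed
  have ux: "norm (u - x) \<le> t * D + e"
  proof -
    have "norm (u - x) \<le> norm (u - J x) + norm (J x - x)" using norm_triangle_ineq[of "u - J x" "J x - x"] by simp
    then show ?thesis using ne[of z x] ex zx unfolding u_def by linarith
  qed
  have uy: "norm (u - y) \<le> (1 - t) * D + e"
  proof -
    have "norm (u - y) \<le> norm (u - J y) + norm (J y - y)" using norm_triangle_ineq[of "u - J y" "J y - y"] by simp
    then show ?thesis using ne[of z y] ey zy unfolding u_def by linarith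
  qed
  have uz: "u - z = (1 - t) *\<^sub>R (u - x) + t *\<^sub>R (u - y)" by (simp add: z_def algebra_simps)
  have xy: "(u - y) - (u - x) = x - y" by simp
  have "(norm (u - z))^2 = (1 - t) * (norm (u - x))^2 + t * (norm (u - y))^2 - t * (1 - t) * D^2"
    unfolding uz convex_comb_norm xy D_def by (rule refl)
  also have "\<dots> \<le> (1 - t) * (t * D + e)^2 + t * ((1 - t) * D + e)^2 - t * (1 - t) * D^2"
  proof -
    have "(norm (u - x))^2 \<le> (t * D + e)^2" using ux by (intro power_mono) auto
    then have 1: "(1 - t) * (norm (u - x))^2 \<le> (1 - t) * (t * D + e)^2" using t by (intro mult_left_mono) auto
    have "(norm (u - y))^2 \<le> ((1 - t) * D + e)^2" using uy by (intro power_mono) auto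
    then have 2: "t * (norm (u - y))^2 \<le> t * ((1 - t) * D + e)^2" using t by (intro mult_left_mono) auto
    show ?thesis using 1 2 by linarith
  qed
  also have "\<dots> = 4 * (t * (1 - t)) * D * e + e^2" by (simp add: power2_eq_square algebra_simps)
  also have "\<dots> \<le> D * e + e^2"
  proof -
    have "4 * (t * (1 - t)) = 1 - (2 * t - 1)^2" by (simp add: power2_eq_square algebra_simps)
    then have "4 * (t * (1 - t)) \<le> 1" using zero_le_power2[of "2 * t - 1"] by linarith
    then have "4 * (t * (1 - t)) * (D * e) \<le> 1 * (D * e)" using e0 by (intro mult_right_mono) (auto simp: D_def)
    then show ?thesis by (simp add: algebra_simps)
  qed
  finally show ?thesis by (simp add: u_def z_def D_def)
qed




lemma num_bound:
  fixes Nr D e :: real and m :: nat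
  assumes "1 \<le> Nr" "0 \<le> D" "D \<le> 2 * Nr" "e = 1 / (24 * Nr * (real m + 1)^2 + 1)"
  shows "D * e + e^2 \<le> (1 / (real m + 1))^2"
proof -
  have den: "1 \<le> 24 * Nr * (real m + 1)^2 + 1" using assms(1) by simp
  have e0: "0 \<le> e" "e \<le> 1" using den by (auto simp: assms(4))
  have "e^2 \<le> e" using e0 unfolding power2_eq_square by (intro mult_left_le_one_le) auto
  moreover have "D * e \<le> 2 * Nr * e" using assms e0 by (intro mult_right_mono) auto
  ultimately have "D * e + e^2 \<le> 2 * Nr * e + 1 * e" by linarith
  also have "\<dots> \<le> 3 * Nr * e" using mult_right_mono[OF assms(1) e0(1)] by simp
  also have "\<dots> \<le> 3 * Nr * (1 / (24 * Nr * (real m + 1)^2))"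
  proof -
    have "e \<le> 1 / (24 * Nr * (real m + 1)^2)" unfolding assms(4)
      by (rule frac_le) (use assms(1) in auto)
    then show ?thesis using assms(1) by (intro mult_left_mono) auto
  qed
  also have "\<dots> = 1 / (8 * (real m + 1)^2)" using assms by (simp add: field_simps)
  also have "\<dots> \<le> 1 / (real m + 1)^2" by (rule frac_le) auto
  also have "\<dots> = (1 / (real m + 1))^2" by (simp add: power_divide)
  finally show ?thesis .
qed

lemma norm_expand2: fixes a b :: "'a::real_inner" and t :: real
  shows "(norm (a - t *\<^sub>R b))^2 = (norm a)^2 - 2 * t * inner a b + t^2 * (norm b)^2"
  unfolding power2_norm_eq_inner
  by (simp add: inner_diff_left inner_diff_right inner_commute algebra_simps power2_eq_square)

theorem mainTheorem3:
  fixes A :: "'a::{real_inner, complete_space} \<Rightarrow> 'a set"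
    and x0 p :: 'a and N :: nat
  assumes "maximal_monotone A"
    and "zeros A \<noteq> {}"
    and "p \<in> zeros A"
    and "N \<noteq> 0"
    and "real N \<ge> 2 * norm (x0 - p)"
  shows "\<forall>(k::nat) (f::nat \<Rightarrow> nat). mono f \<longrightarrow>
    (\<exists>n. n \<le> 24 * N * (((w_fun f N) ^^ (4 * N^4 * (k + 1)^2)) 0 + 1)^2 \<and>
      (\<exists>x \<in> cball p (real N).
         norm (resolvent A x - x) \<le> 1 / (real (f n) + 1) \<and>
         (\<forall>y \<in> cball p (real N).
            norm (resolvent A y - y) \<le> 1 / (real n + 1) \<longrightarrow>
            inner (x0 - x) (y - x) \<le> 1 / (real k + 1))))"
proof (intro allI impI)
  fix k :: nat and f :: "nat \<Rightarrow> nat" assume "mono f"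
  have mon: "monotone_op A" using assms(1) by (simp add: maximal_monotone_def)
  have Jne: "\<And>a b. norm (resolvent A a - resolvent A b) \<le> norm (a - b)"
    by (rule res_nonexp[OF assms(1)])
  have Jp: "resolvent A p = p" by (rule res_zero[OF mon assms(3)])
  define Nr where "Nr = real N"
  have N1: "1 \<le> Nr" using assms(4) by (simp add: Nr_def)
  have x0p: "norm (x0 - p) \<le> Nr / 2" using assms(5) by (simp add: Nr_def)
  define Dm where "Dm m = {y \<in> cball p Nr. norm (resolvent A y - y) \<le> 1 / (real m + 1)}" for m :: nat
  define d where "d m = Inf ((\<lambda>y. (norm (x0 - y))^2) ` Dm m)" for m
  have pD: "p \<in> Dm m" for m using N1 by (simp add: Dm_def Jp)
  have bdd: "bdd_below ((\<lambda>y. (norm (x0 - y))^2) ` Dm m)" for m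
    by (auto intro!: bdd_belowI2[where m=0])
  have d_lower: "d m \<le> (norm (x0 - y))^2" if "y \<in> Dm m" for m y
    unfolding d_def by (rule cInf_lower) (use that bdd in auto)
  have d0: "0 \<le> d m" for m
    unfolding d_def using pD[of m] by (intro cInf_greatest) auto
  have dle: "d m \<le> Nr^2 / 4" for m
  proof -
    have "d m \<le> (norm (x0 - p))^2" by (rule d_lower[OF pD])
    also have "\<dots> \<le> (Nr / 2)^2" using x0p by (intro power_mono) auto
    finally show ?thesis by (simp add: power_divide)
  qed
  have d_approx: "\<exists>x\<in>Dm m. (norm (x0 - x))^2 < d m + c" if "c > 0" for m c
  proof -
    have "Inf ((\<lambda>y. (norm (x0 - y))^2) ` Dm m) < d m + c" using that by (simp add: d_def)
    then show ?thesis using pD[of m] bdd[of m] by (subst (asm) cInf_less_iff) auto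
  qed
  define w where "w = w_fun f N"
  define ms where "ms i = (w ^^ i) 0" for i
  have ms_Suc: "ms (Suc i) = w (ms i)" for i by (simp add: ms_def)
  have w_ge: "24 * N * (m + 1)^2 \<le> w m" "f (24 * N * (m + 1)^2) \<le> w m" for m
    by (simp_all add: w_def w_fun_def)
  have m_le: "m \<le> 24 * N * (m + 1)^2" for m
  proof -
    have "m \<le> (m + 1)^2" by (simp add: power2_eq_square)
    also have "\<dots> \<le> 24 * N * (m + 1)^2" using assms(4) by simp
    finally show ?thesis .
  qed
  have ms_step: "ms i \<le> ms (Suc i)" for i using m_le[of "ms i"] w_ge(1)[of "ms i"] ms_Suc[of i] by linarith
  have ms_mono: "ms i \<le> ms j" if "i \<le> j" for i j
    using ms_step that by (rule lift_Suc_mono_le)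
  define K where "K = real k + 1"
  have K1: "1 \<le> K" by (simp add: K_def)
  define R where "R = 4 * N^4 * (k + 1)^2"
  define c where "c = 1 / (16 * Nr^2 * K^2)"
  have c0: "0 < c" using N1 K1 by (simp add: c_def)
  have realR: "real R = 4 * Nr^4 * K^2" by (simp add: R_def Nr_def K_def)
  have "real R * c = (4 * Nr^4 * K^2) / (16 * Nr^2 * K^2)" by (simp add: c_def realR)
  also have "\<dots> = Nr^2 / 4" using N1 K1 by (simp add: field_simps power2_eq_square power4_eq_xxxx)
  finally have Rc: "real R * c = Nr^2 / 4" .
  have R1: "1 \<le> R" using assms(4) by (simp add: R_def)
  have gap: "\<exists>i<R. d (ms (Suc i)) - d (ms i) \<le> c"
  proof (rule ccontr)
    assume "\<not> ?thesis"
    then have H: "\<And>i. i < R \<Longrightarrow> d (ms (Suc i)) - d (ms i) > c" by auto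
    have ind: "j \<le> R \<Longrightarrow> d (ms j) - d (ms 0) \<ge> real j * c" for j
    proof (induction j)
      case 0 then show ?case by simp
    next
      case (Suc j)
      then have "d (ms j) - d (ms 0) \<ge> real j * c" "d (ms (Suc j)) - d (ms j) > c" using H by auto
      then show ?case by (simp add: algebra_simps)
    qed
    obtain R' where R': "R = Suc R'" using R1 by (cases R) auto
    have "d (ms R') - d (ms 0) \<ge> real R' * c" using ind[of R'] R' by simp
    moreover have "d (ms R) - d (ms R') > c" using H[of R'] R' by simp
    ultimately have "d (ms R) - d (ms 0) > real R * c" using R' by (simp add: algebra_simps)
    moreover have "d (ms R) - d (ms 0) \<le> Nr^2 / 4" using dle[of "ms R"] d0[of "ms 0"] by linarith
    ultimately show False using Rc by linarith
  qed
  then obtain i where iR: "i < R" and gi: "d (ms (Suc i)) - d (ms i) \<le> c" by blast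
  define m where "m = ms i"
  define M where "M = ms (Suc i)"
  define n where "n = 24 * N * (m + 1)^2"
  have Mn: "n \<le> M" "f n \<le> M" using w_ge[of m] by (simp_all add: M_def ms_Suc m_def n_def)
  have n_bound: "n \<le> 24 * N * (((w_fun f N) ^^ (4 * N^4 * (k + 1)^2)) 0 + 1)^2"
  proof -
    have "m \<le> ms R" using ms_mono[of i R] iR by (simp add: m_def)
    then have "(m + 1)^2 \<le> (ms R + 1)^2" by (intro power_mono) auto
    then show ?thesis by (simp add: n_def ms_def w_def R_def)
  qed
  obtain x where xD: "x \<in> Dm M" and xd: "(norm (x0 - x))^2 < d M + c"
    using d_approx[OF c0] by blast
  have xball: "x \<in> cball p Nr" and xres: "norm (resolvent A x - x) \<le> 1 / (real M + 1)"
    using xD by (auto simp: Dm_def)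
  have real_n: "real n + 1 = 24 * Nr * (real m + 1)^2 + 1" by (simp add: n_def Nr_def)
  show "\<exists>n. n \<le> 24 * N * (((w_fun f N) ^^ (4 * N^4 * (k + 1)^2)) 0 + 1)^2 \<and>
      (\<exists>x \<in> cball p (real N).
         norm (resolvent A x - x) \<le> 1 / (real (f n) + 1) \<and>
         (\<forall>y \<in> cball p (real N).
            norm (resolvent A y - y) \<le> 1 / (real n + 1) \<longrightarrow>
            inner (x0 - x) (y - x) \<le> 1 / (real k + 1)))"
  proof (intro exI conjI bexI ballI impI)
    show "n \<le> 24 * N * (((w_fun f N) ^^ (4 * N^4 * (k + 1)^2)) 0 + 1)^2" by (rule n_bound)
    show "x \<in> cball p (real N)" using xball by (simp add: Nr_def)
    have "1 / (real M + 1) \<le> 1 / (real (f n) + 1)" using Mn(2) by (simp add: frac_le)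
    then show "norm (resolvent A x - x) \<le> 1 / (real (f n) + 1)" using xres by linarith
    fix y assume yball: "y \<in> cball p (real N)" and yres: "norm (resolvent A y - y) \<le> 1 / (real n + 1)"
    define t where "t = 1 / (4 * Nr^2 * K)"
    have a1: "1 \<le> Nr^2" using N1 by (rule one_le_power)
    have "1 * 1 \<le> Nr^2 * K" using mult_mono[OF a1 K1] by simp
    then have den1: "1 \<le> 4 * Nr^2 * K" by linarith
    have t0: "0 < t" unfolding t_def by (intro divide_pos_pos) (use den1 in linarith)+
    have "1 / (4 * Nr^2 * K) \<le> 1 / 1" by (rule frac_le) (use den1 in auto)
    then have t1: "t \<le> 1" by (simp add: t_def)
    define z where "z = (1 - t) *\<^sub>R x + t *\<^sub>R y"
    have zball: "z \<in> cball p Nr" unfolding z_def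
      using xball yball t0 t1 by (intro convexD[OF convex_cball]) (auto simp: Nr_def)
    have xres': "norm (resolvent A x - x) \<le> 1 / (real n + 1)"
    proof -
      have "1 / (real M + 1) \<le> 1 / (real n + 1)" using Mn(1) by (simp add: frac_le)
      then show ?thesis using xres by linarith
    qed
    have dxy: "norm (x - y) \<le> 2 * Nr"
    proof -
      have "norm (x - y) \<le> dist x p + dist p y" by (metis dist_norm dist_triangle)
      then show ?thesis using xball yball by (simp add: Nr_def dist_commute)
    qed
    have "(norm (resolvent A z - z))^2 \<le> norm (x - y) * (1 / (real n + 1)) + (1 / (real n + 1))^2"
      unfolding z_def by (rule combo[OF Jne xres' yres]) (use t0 t1 in auto)
    also have "\<dots> \<le> (1 / (real m + 1))^2"
      by (rule num_bound[OF N1 norm_ge_zero dxy]) (simp add: real_n)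
    finally have "norm (resolvent A z - z) \<le> 1 / (real m + 1)"
      by (rule power2_le_imp_le) simp
    then have zD: "z \<in> Dm m" using zball by (simp add: Dm_def)
    have dmz: "d m \<le> (norm (x0 - z))^2" by (rule d_lower[OF zD])
    have xz: "x0 - z = (x0 - x) - t *\<^sub>R (y - x)" by (simp add: z_def algebra_simps)
    have ez: "(norm (x0 - z))^2 = (norm (x0 - x))^2 - 2 * t * inner (x0 - x) (y - x) + t^2 * (norm (y - x))^2"
      unfolding xz by (rule norm_expand2)
    have "(norm (y - x))^2 \<le> (2 * Nr)^2" using dxy by (intro power_mono) (auto simp: norm_minus_commute)
    then have "t^2 * (norm (y - x))^2 \<le> t^2 * (2 * Nr)^2" by (intro mult_left_mono) auto
    then have "2 * t * inner (x0 - x) (y - x) < 2 * c + 4 * Nr^2 * t^2"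
      using ez dmz xd gi by (simp add: M_def m_def power_mult_distrib algebra_simps)
    then have "inner (x0 - x) (y - x) < (2 * c + 4 * Nr^2 * t^2) / (2 * t)"
      using t0 by (simp add: pos_less_divide_eq mult.commute)
    also have "(2 * c + 4 * Nr^2 * t^2) / (2 * t) = 3 / (4 * K)"
      using N1 K1 by (simp add: c_def t_def field_simps power2_eq_square)
    also have "\<dots> \<le> 1 / K" using K1 by (simp add: field_simps)
    finally show "inner (x0 - x) (y - x) \<le> 1 / (real k + 1)" by (simp add: K_def)
  qed
qed


end
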